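(* Suppose the e-values are valid ($\mathbb{E}[e_t\mid\mathcal{F}_{t-1}]\le1$ a.s. whenever $\theta_t=0$), and that the null e-values $\{e_j:\theta_j=0\}$ are mutually independent and independent of the non-null e-values $\{e_j:\theta_j=1\}$, each null e-value satisfying $\mathbb{E}[e_j]\le 1$. Suppose the testing levels are of the form $\alpha_t=f_t(\delta_1,\dots,\delta_{t-1})$ for deterministic functions $f_t:\{0,1\}^{t-1}\to[0,\infty)$ that are coordinatewise nondecreasing. Let $$\mathrm{FDP}^*_{\mathrm{e\text{-}ind}}(t)=\frac{\sum_{j\in\mathcal{H}_0(t)}\alpha_j}{R_t\vee1}.$$ Then for every $t\ge1$: if $\mathbb{E}[\mathrm{FDP}^*_{\mathrm{e\text{-}ind}}(t)]\le\alpha$, then $\mathrm{FDR}(t)\le\alpha$.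
   Context: Let $\alpha\in(0,1)$ be a target level. Hypotheses are indexed by $t=1,2,\dots$; $\theta_t\in\{0,1\}$ is a fixed (non-random) indicator with $\theta_t=0$ iff the $t$-th null hypothesis is true. $e_1,e_2,\dots$ are nonnegative random variables (e-values). Testing levels $\alpha_1,\alpha_2,\dots$ are nonnegative random variables and the decisions are $\delta_t=\mathbb{1}\{e_t\ge 1/\alpha_t\}$ (with $\delta_t=0$ when $\alpha_t=0$). Let $\mathcal{F}_t=\sigma(\delta_1,\dots,\delta_t)$, $\mathcal{F}_0$ trivial. $R_t=\sum_{j=1}^t\delta_j$, $R_0=0$. $\mathcal{H}_0(t)=\{j\le t:\theta_j=0\}$. $\mathrm{FDR}(t)=\mathbb{E}\big[\sum_{j\in\mathcal{H}_0(t)}\delta_j/(R_t\vee 1)\big]$. *)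

theory Defs
  imports "HOL-Probability.Probability"
begin

text \<open>Hypotheses are indexed by t = 1,2,...\<close>

fun decs :: "(nat \<Rightarrow> bool list \<Rightarrow> real) \<Rightarrow> (nat \<Rightarrow> real) \<Rightarrow> nat \<Rightarrow> bool list" where
  "decs f xv 0 = []"
| "decs f xv (Suc n) =
     decs f xv n @ [0 < f (Suc n) (decs f xv n) \<and> xv (Suc n) \<ge> 1 / f (Suc n) (decs f xv n)]"

definition lvl :: "(nat \<Rightarrow> bool list \<Rightarrow> real) \<Rightarrow> (nat \<Rightarrow> real) \<Rightarrow> nat \<Rightarrow> real" where
  "lvl f xv t = f t (decs f xv (t - 1))"

definition dlt :: "(nat \<Rightarrow> bool list \<Rightarrow> real) \<Rightarrow> (nat \<Rightarrow> real) \<Rightarrow> nat \<Rightarrow> real" where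
  "dlt f xv t = (if decs f xv t ! (t - 1) then 1 else 0)"

definition rej :: "(nat \<Rightarrow> bool list \<Rightarrow> real) \<Rightarrow> (nat \<Rightarrow> real) \<Rightarrow> nat \<Rightarrow> real" where
  "rej f xv t = (\<Sum>j\<in>{1..t}. dlt f xv j)"

definition nulls :: "(nat \<Rightarrow> nat) \<Rightarrow> nat \<Rightarrow> nat set" where
  "nulls \<theta> t = {j \<in> {1..t}. \<theta> j = 0}"

definition filt :: "'a measure \<Rightarrow> (nat \<Rightarrow> bool list \<Rightarrow> real) \<Rightarrow> (nat \<Rightarrow> 'a \<Rightarrow> real) \<Rightarrow> nat \<Rightarrow> 'a measure" where
  "filt M f e n = vimage_algebra (space M) (\<lambda>\<omega>. decs f (\<lambda>j. e j \<omega>) n) (count_space UNIV)"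

definition FDR :: "'a measure \<Rightarrow> (nat \<Rightarrow> nat) \<Rightarrow> (nat \<Rightarrow> bool list \<Rightarrow> real) \<Rightarrow> (nat \<Rightarrow> 'a \<Rightarrow> real) \<Rightarrow> nat \<Rightarrow> real" where
  "FDR M \<theta> f e t = (\<integral>\<omega>. (\<Sum>j\<in>nulls \<theta> t. dlt f (\<lambda>i. e i \<omega>) j) / max (rej f (\<lambda>i. e i \<omega>) t) 1 \<partial>M)"

definition FDPstar :: "(nat \<Rightarrow> nat) \<Rightarrow> (nat \<Rightarrow> bool list \<Rightarrow> real) \<Rightarrow> (nat \<Rightarrow> real) \<Rightarrow> nat \<Rightarrow> real" where
  "FDPstar \<theta> f xv t = (\<Sum>j\<in>nulls \<theta> t. lvl f xv j) / max (rej f xv t) 1"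

end

theory Submission
  imports Defs
begin

lemma decs_length[simp]: "length (decs f xv n) = n"
  by (induction n) auto

lemma decs_last: "decs f xv (Suc n) ! n =
   (0 < f (Suc n) (decs f xv n) \<and> xv (Suc n) \<ge> 1 / f (Suc n) (decs f xv n))"
  by (simp add: nth_append)

lemma decs_local: "(\<And>i. 1 \<le> i \<Longrightarrow> i \<le> n \<Longrightarrow> xv i = xv' i) \<Longrightarrow> decs f xv n = decs f xv' n"
  by (induction n) auto

lemma decs_mono:
  assumes f_mono: "\<And>s xs ys. 1 \<le> s \<Longrightarrow> length xs = s - 1 \<Longrightarrow> length ys = s - 1 \<Longrightarrow>
        list_all2 (\<le>) xs ys \<Longrightarrow> f s xs \<le> f s ys"
    and le: "\<And>i. xv i \<le> xv' i"
  shows "list_all2 (\<le>) (decs f xv n) (decs f xv' n)"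
proof (induction n)
  case 0 then show ?case by simp
next
  case (Suc n)
  have a: "f (Suc n) (decs f xv n) \<le> f (Suc n) (decs f xv' n)"
    using f_mono[of "Suc n", OF _ _ _ Suc.IH] by simp
  have "(0 < f (Suc n) (decs f xv n) \<and> xv (Suc n) \<ge> 1 / f (Suc n) (decs f xv n)) \<le>
        (0 < f (Suc n) (decs f xv' n) \<and> xv' (Suc n) \<ge> 1 / f (Suc n) (decs f xv' n))"
  proof -
    { assume p: "0 < f (Suc n) (decs f xv n)" "xv (Suc n) \<ge> 1 / f (Suc n) (decs f xv n)"
      then have "0 < f (Suc n) (decs f xv' n)" using a by linarith
      moreover have "1 / f (Suc n) (decs f xv' n) \<le> 1 / f (Suc n) (decs f xv n)"
        using p a by (intro divide_left_mono) auto
      ultimately have "0 < f (Suc n) (decs f xv' n) \<and> xv' (Suc n) \<ge> 1 / f (Suc n) (decs f xv' n)"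
        using p le[of "Suc n"] by linarith }
    then show ?thesis by (auto simp: le_bool_def)
  qed
  then show ?case using Suc by (simp add: list_all2_appendI)
qed

lemma dlt_mono:
  assumes f_mono: "\<And>s xs ys. 1 \<le> s \<Longrightarrow> length xs = s - 1 \<Longrightarrow> length ys = s - 1 \<Longrightarrow>
        list_all2 (\<le>) xs ys \<Longrightarrow> f s xs \<le> f s ys"
    and le: "\<And>i. xv i \<le> xv' i" and k: "1 \<le> k"
  shows "dlt f xv k \<le> dlt f xv' k"
proof -
  have "decs f xv k ! (k-1) \<le> decs f xv' k ! (k-1)"
    using list_all2_nthD[OF decs_mono[OF f_mono le, where n=k], where p="k-1"] k by simp
  then show ?thesis unfolding dlt_def le_bool_def by auto
qed

lemma rej_mono:
  assumes f_mono: "\<And>s xs ys. 1 \<le> s \<Longrightarrow> length xs = s - 1 \<Longrightarrow> length ys = s - 1 \<Longrightarrow>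
        list_all2 (\<le>) xs ys \<Longrightarrow> f s xs \<le> f s ys"
    and le: "\<And>i. xv i \<le> xv' i"
  shows "rej f xv t \<le> rej f xv' t"
  unfolding rej_def by (intro sum_mono dlt_mono[OF f_mono le]) auto

lemma dlt_01: "0 \<le> dlt f xv k" "dlt f xv k \<le> 1"
  unfolding dlt_def by auto

lemma rej_nonneg: "0 \<le> rej f xv t"
  unfolding rej_def by (intro sum_nonneg) (simp add: dlt_01)

lemma pred_step_meas:
  assumes "\<And>i. (\<lambda>\<omega>. X \<omega> i) \<in> borel_measurable N"
  shows "(\<lambda>\<omega>. 0 < (c::real) \<and> X \<omega> (Suc n) \<ge> 1 / c) \<in> measurable N (count_space UNIV)"
proof -
  have "(\<lambda>\<omega>. X \<omega> (Suc n) \<ge> 1 / c) \<in> measurable N (count_space UNIV)"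
    using assms[of "Suc n"] unfolding pred_def[symmetric] by measurable
  then show ?thesis by (cases "0 < c") simp_all
qed

lemma snoc_meas:
  fixes l :: "bool list"
  assumes p: "P \<in> measurable N (count_space UNIV)"
  shows "(\<lambda>\<omega>. l @ [P \<omega>]) \<in> measurable N (count_space UNIV)"
  using measurable_compose[OF p, of "\<lambda>b. l @ [b]" "count_space UNIV"] by (simp add: o_def)

lemma decs_meas:
  assumes "\<And>i. (\<lambda>\<omega>. X \<omega> i) \<in> borel_measurable N"
  shows "(\<lambda>\<omega>. decs f (X \<omega>) n) \<in> measurable N (count_space UNIV)"
proof (induction n)
  case 0 then show ?case by simp
next
  case (Suc n)
  have "(\<lambda>\<omega>. (\<lambda>l \<omega>. l @ [0 < f (Suc n) l \<and> X \<omega> (Suc n) \<ge> 1 / f (Suc n) l]) (decs f (X \<omega>) n) \<omega>)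
     \<in> measurable N (count_space UNIV)"
  proof (rule measurable_compose_countable[OF _ Suc])
    fix l :: "bool list"
    show "(\<lambda>\<omega>. l @ [0 < f (Suc n) l \<and> X \<omega> (Suc n) \<ge> 1 / f (Suc n) l]) \<in> measurable N (count_space UNIV)"
      by (rule snoc_meas[OF pred_step_meas[OF assms]])
  qed
  then show ?case unfolding decs.simps(2) .
qed

lemma dlt_meas:
  assumes "\<And>i. (\<lambda>\<omega>. X \<omega> i) \<in> borel_measurable N"
  shows "(\<lambda>\<omega>. dlt f (X \<omega>) k) \<in> borel_measurable N"
  unfolding dlt_def
  by (rule measurable_compose[OF decs_meas[OF assms], where g="\<lambda>l. if l ! (k-1) then 1 else 0"]) simp

lemma lvl_meas:
  assumes "\<And>i. (\<lambda>\<omega>. X \<omega> i) \<in> borel_measurable N"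
  shows "(\<lambda>\<omega>. lvl f (X \<omega>) k) \<in> borel_measurable N"
  unfolding lvl_def
  by (rule measurable_compose[OF decs_meas[OF assms], where g="\<lambda>l. f k l"]) simp

lemma rej_meas:
  assumes "\<And>i. (\<lambda>\<omega>. X \<omega> i) \<in> borel_measurable N"
  shows "(\<lambda>\<omega>. rej f (X \<omega>) k) \<in> borel_measurable N"
  unfolding rej_def by (rule borel_measurable_sum) (rule dlt_meas[OF assms])

lemma quot_meas:
  assumes "\<And>i. (\<lambda>\<omega>. X \<omega> i) \<in> borel_measurable N"
  shows "(\<lambda>\<omega>. lvl f (X \<omega>) j / max (rej f (X \<omega>) t) 1) \<in> borel_measurable N"
    "(\<lambda>\<omega>. dlt f (X \<omega>) j / max (rej f (X \<omega>) t) 1) \<in> borel_measurable N"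
  using lvl_meas[OF assms] dlt_meas[OF assms] rej_meas[OF assms]
  by (auto intro!: borel_measurable_divide borel_measurable_max)

lemma preimage_Int_stable: "Int_stable {g -` A \<inter> S | A. A \<in> sets N}"
  unfolding Int_stable_def
proof safe
  fix A B assume "A \<in> sets N" "B \<in> sets N"
  then show "\<exists>C. (g -` A \<inter> S) \<inter> (g -` B \<inter> S) = g -` C \<inter> S \<and> C \<in> sets N"
    by (intro exI[of _ "A \<inter> B"] conjI) (blast, simp add: sets.Int)
qed


lemma (in prob_space) L_sets:
  fixes e :: "nat \<Rightarrow> 'a \<Rightarrow> real"
  assumes E_def: "E = (\<lambda>i. if i = 0 then {(\<lambda>\<omega>. \<lambda>i\<in>P. e i \<omega>) -` B \<inter> space M | B. B \<in> sets (PiM P (\<lambda>_. borel))}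
                            else {e i -` B \<inter> space M | B. B \<in> sets borel})"
    and S_def: "S = sigma (space M) (\<Union>i\<in>K. E i)"
  shows "space S = space M" "sets S = sigma_sets (space M) (\<Union>i\<in>K. E i)"
proof -
  have sub: "(\<Union>i\<in>K. E i) \<subseteq> Pow (space M)" by (auto simp: E_def)
  then show "space S = space M" by (simp add: S_def space_measure_of_conv)
  from sub show "sets S = sigma_sets (space M) (\<Union>i\<in>K. E i)" by (simp add: S_def)
qed

lemma (in prob_space) L_meas:
  fixes e :: "nat \<Rightarrow> 'a \<Rightarrow> real"
  assumes E_def: "E = (\<lambda>i. if i = 0 then {(\<lambda>\<omega>. \<lambda>i\<in>P. e i \<omega>) -` B \<inter> space M | B. B \<in> sets (PiM P (\<lambda>_. borel))}
                            else {e i -` B \<inter> space M | B. B \<in> sets borel})"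
    and S_def: "S = sigma (space M) (\<Union>i\<in>insert 0 K. E i)"
    and i: "i \<in> K \<or> i \<in> P" and i0: "i \<noteq> 0"
  shows "e i \<in> borel_measurable S"
proof (rule measurableI)
  note L = L_sets[OF E_def S_def]
  fix A :: "real set" assume A: "A \<in> sets borel"
  have "e i -` A \<inter> space M \<in> (\<Union>i\<in>insert 0 K. E i)"
  proof (cases "i \<in> K")
    case True then show ?thesis using A i0 by (auto simp: E_def)
  next
    case False
    then have iP: "i \<in> P" using i by auto
    define G where "G = (\<lambda>v. v i) -` A \<inter> space (PiM P (\<lambda>_. borel :: real measure))"
    have G: "G \<in> sets (PiM P (\<lambda>_. borel))"
      unfolding G_def by (rule measurable_sets[OF measurable_component_singleton[OF iP] A])
    have "e i -` A \<inter> space M = (\<lambda>\<omega>. \<lambda>i\<in>P. e i \<omega>) -` G \<inter> space M"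
      using iP by (auto simp: G_def space_PiM)
    then have "e i -` A \<inter> space M \<in> E 0" using G by (auto simp: E_def)
    then show ?thesis by blast
  qed
  then show "e i -` A \<inter> space S \<in> sets S" by (auto simp: L)
qed auto

lemma (in prob_space) L_indep:
  fixes e :: "nat \<Rightarrow> 'a \<Rightarrow> real"
  assumes ind: "indep_vars (\<lambda>_. borel) e N"
    and nn: "indep_var (PiM N (\<lambda>_. borel)) (\<lambda>\<omega>. \<lambda>i\<in>N. e i \<omega>) (PiM P (\<lambda>_. borel)) (\<lambda>\<omega>. \<lambda>i\<in>P. e i \<omega>)"
    and j: "j \<in> N" and N0: "0 \<notin> N"
    and E_def: "E = (\<lambda>i. if i = 0 then {(\<lambda>\<omega>. \<lambda>i\<in>P. e i \<omega>) -` B \<inter> space M | B. B \<in> sets (PiM P (\<lambda>_. borel))}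
                            else {e i -` B \<inter> space M | B. B \<in> sets borel})"
    and Zm: "Z \<in> borel_measurable M"
    and Zs: "\<And>B. B \<in> sets borel \<Longrightarrow> Z -` B \<inter> space M \<in> sigma_sets (space M) (\<Union>i\<in>insert 0 (N - {j}). E i)"
  shows "indep_var borel (e j) borel Z"
proof -
  let ?W = "\<lambda>\<omega>. \<lambda>i\<in>P. e i \<omega>"
  let ?X = "\<lambda>\<omega>. \<lambda>i\<in>N. e i \<omega>"
  have Wm: "random_variable (PiM P (\<lambda>_. borel)) ?W" using indep_var_rv2[OF nn] .
  have em: "\<And>i. i \<in> N \<Longrightarrow> random_variable borel (e i)"
    using ind unfolding indep_vars_def2 by auto
  have indN: "indep_sets (\<lambda>i. {e i -` A \<inter> space M | A. A \<in> sets borel}) N"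
    using ind unfolding indep_vars_def2 by auto
  have nn2: "\<And>a b. a \<in> sigma_sets (space M) {?X -` A \<inter> space M | A. A \<in> sets (PiM N (\<lambda>_. borel))} \<Longrightarrow>
       b \<in> sigma_sets (space M) {?W -` A \<inter> space M | A. A \<in> sets (PiM P (\<lambda>_. borel))} \<Longrightarrow>
       prob (a \<inter> b) = prob a * prob b"
  proof -
    fix a b
    assume ab: "a \<in> sigma_sets (space M) {?X -` A \<inter> space M | A. A \<in> sets (PiM N (\<lambda>_. borel))}"
      "b \<in> sigma_sets (space M) {?W -` A \<inter> space M | A. A \<in> sets (PiM P (\<lambda>_. borel))}"
    have "indep_set (sigma_sets (space M) {?X -` A \<inter> space M | A. A \<in> sets (PiM N (\<lambda>_. borel))})
       (sigma_sets (space M) {?W -` A \<inter> space M | A. A \<in> sets (PiM P (\<lambda>_. borel))})"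
      using nn unfolding indep_var_eq by (rule conjunct2)
    from indep_setD[OF this ab] show "prob (a \<inter> b) = prob a * prob b" .
  qed
  have I1: "indep_sets E (insert 0 N)"
  proof (rule indep_setsI)
    fix i assume "i \<in> insert 0 N"
    then show "E i \<subseteq> events"
      using Wm em by (auto simp: E_def intro: measurable_sets)
  next
    fix A J assume J: "J \<noteq> {}" "J \<subseteq> insert 0 N" "finite J" and A: "\<forall>j\<in>J. A j \<in> E j"
    show "prob (\<Inter>j\<in>J. A j) = (\<Prod>j\<in>J. prob (A j))"
    proof (cases "0 \<in> J")
      case False
      then have JN: "J \<subseteq> N" using J by auto
      have "\<forall>i\<in>J. A i \<in> {e i -` A \<inter> space M | A. A \<in> sets borel}"
        using A False by (auto simp: E_def split: if_splits)
      then show ?thesis using indep_setsD[OF indN JN J(1) J(3)] by blast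
    next
      case True
      define J' where "J' = J - {0}"
      have J'N: "J' \<subseteq> N" and fJ': "finite J'" using J by (auto simp: J'_def)
      have "A 0 \<in> E 0" using A True by blast
      then obtain B0 where B0: "B0 \<in> sets (PiM P (\<lambda>_. borel))" "A 0 = ?W -` B0 \<inter> space M"
        by (auto simp: E_def)
      show ?thesis
      proof (cases "J' = {}")
        case True
        then have "J = {0}" using \<open>0 \<in> J\<close> by (auto simp: J'_def)
        then show ?thesis by simp
      next
        case False
        have "\<forall>i\<in>J'. \<exists>B. B \<in> sets borel \<and> A i = e i -` B \<inter> space M"
        proof
          fix i assume i: "i \<in> J'"
          then have "A i \<in> E i" "i \<noteq> 0" using A by (auto simp: J'_def)
          then show "\<exists>B. B \<in> sets borel \<and> A i = e i -` B \<inter> space M" by (auto simp: E_def)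
        qed
        from bchoice[OF this] obtain Bf
          where Bf': "\<forall>i\<in>J'. Bf i \<in> sets borel \<and> A i = e i -` Bf i \<inter> space M" by blast
        then have Bf: "\<And>i. i \<in> J' \<Longrightarrow> Bf i \<in> sets borel \<and> A i = e i -` Bf i \<inter> space M" by blast
        define G where "G = {v \<in> space (PiM N (\<lambda>_. borel :: real measure)). \<forall>i\<in>J'. v i \<in> Bf i}"
        have Gi: "{v \<in> space (PiM N (\<lambda>_. borel :: real measure)). v i \<in> Bf i} \<in> sets (PiM N (\<lambda>_. borel))"
          if "i \<in> J'" for i
        proof -
          have "(\<lambda>v. v i) -` Bf i \<inter> space (PiM N (\<lambda>_. borel :: real measure)) \<in> sets (PiM N (\<lambda>_. borel))"
            by (rule measurable_sets[OF measurable_component_singleton]) (use that J'N Bf in auto)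
          moreover have "(\<lambda>v. v i) -` Bf i \<inter> space (PiM N (\<lambda>_. borel :: real measure)) =
             {v \<in> space (PiM N (\<lambda>_. borel :: real measure)). v i \<in> Bf i}" by auto
          ultimately show ?thesis by simp
        qed
        have G: "G \<in> sets (PiM N (\<lambda>_. borel))"
          unfolding G_def by (rule sets.sets_Collect_finite_All[OF Gi fJ'])
        have inter: "(\<Inter>i\<in>J'. A i) = ?X -` G \<inter> space M"
          using False Bf J'N by (auto simp: G_def space_PiM)
        have JJ: "(\<Inter>i\<in>J. A i) = (\<Inter>i\<in>J'. A i) \<inter> A 0"
          using True by (auto simp: J'_def)
        have "prob (\<Inter>i\<in>J. A i) = prob (?X -` G \<inter> space M) * prob (A 0)"
          unfolding JJ inter
          by (rule nn2) (use G B0 in blast)+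
        also have "prob (?X -` G \<inter> space M) = (\<Prod>i\<in>J'. prob (A i))"
          unfolding inter[symmetric]
          by (rule indep_setsD[OF indN J'N False fJ']) (use Bf in blast)
        also have "(\<Prod>i\<in>J'. prob (A i)) * prob (A 0) = (\<Prod>i\<in>J. prob (A i))"
          using prod.remove[OF J(3) True, of "\<lambda>i. prob (A i)"] by (simp add: J'_def mult.commute)
        finally show ?thesis .
      qed
    qed
  qed
  have j0: "j \<noteq> 0"
  proof
    assume "j = 0" with j N0 show False by simp
  qed
  have U: "(\<Union>b\<in>UNIV. (case b of True \<Rightarrow> {j} | False \<Rightarrow> insert 0 (N - {j}))) = insert 0 N"
    using j j0 by (auto simp: UNIV_bool)
  have I2: "indep_sets (\<lambda>b. sigma_sets (space M) (\<Union>i\<in>(case b of True \<Rightarrow> {j} | False \<Rightarrow> insert 0 (N - {j})). E i)) UNIV"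
  proof (rule indep_sets_collect_sigma)
    show "indep_sets E (\<Union>b\<in>UNIV. (case b of True \<Rightarrow> {j} | False \<Rightarrow> insert 0 (N - {j})))"
      unfolding U by (rule I1)
    show "Int_stable (E i)" for i
      by (cases "i = 0") (simp_all add: E_def preimage_Int_stable)
    show "disjoint_family_on (\<lambda>b. case b of True \<Rightarrow> {j} | False \<Rightarrow> insert 0 (N - {j})) UNIV"
      using j0 by (auto simp: disjoint_family_on_def UNIV_bool)
  qed
  show ?thesis
    unfolding indep_var_eq
  proof (intro conjI)
    show "random_variable borel (e j)" by (rule em[OF j])
    show "random_variable borel Z" by (rule Zm)
    show "indep_set (sigma_sets (space M) {e j -` A \<inter> space M |A. A \<in> sets borel})
       (sigma_sets (space M) {Z -` A \<inter> space M |A. A \<in> sets borel})"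
      unfolding indep_set_def
    proof (rule indep_sets_mono_sets[OF I2])
      fix b :: bool
      show "(case b of True \<Rightarrow> sigma_sets (space M) {e j -` A \<inter> space M |A. A \<in> sets borel}
              | False \<Rightarrow> sigma_sets (space M) {Z -` A \<inter> space M |A. A \<in> sets borel})
          \<subseteq> sigma_sets (space M) (\<Union>i\<in>(case b of True \<Rightarrow> {j} | False \<Rightarrow> insert 0 (N - {j})). E i)"
      proof (cases b)
        case True
        have "E j = {e j -` A \<inter> space M |A. A \<in> sets borel}" using j0 by (simp add: E_def)
        then show ?thesis using True by simp
      next
        case False
        have "{Z -` A \<inter> space M |A. A \<in> sets borel} \<subseteq> sigma_sets (space M) (\<Union>i\<in>insert 0 (N - {j}). E i)"
          using Zs by blast
        then have "sigma_sets (space M) {Z -` A \<inter> space M |A. A \<in> sets borel}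
            \<subseteq> sigma_sets (space M) (\<Union>i\<in>insert 0 (N - {j}). E i)" by (rule sigma_sets_mono)
        then show ?thesis using False by simp
      qed
    qed
  qed
qed

theorem theorem5:
  fixes M :: "'a measure" and e :: "nat \<Rightarrow> 'a \<Rightarrow> real" and \<theta> :: "nat \<Rightarrow> nat"
    and f :: "nat \<Rightarrow> bool list \<Rightarrow> real" and alpha :: real and t :: nat
  assumes "prob_space M"
    and "0 < alpha" "alpha < 1"
    and theta01: "\<And>j. \<theta> j \<in> {0, 1}"
    and e_meas: "\<And>j. e j \<in> borel_measurable M"
    and e_nonneg: "\<And>j \<omega>. \<omega> \<in> space M \<Longrightarrow> 0 \<le> e j \<omega>"
    and valid: "\<And>j. 1 \<le> j \<Longrightarrow> \<theta> j = 0 \<Longrightarrow>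
        AE \<omega> in M. real_cond_exp M (filt M f e (j - 1)) (e j) \<omega> \<le> 1"
    and null_integrable: "\<And>j. 1 \<le> j \<Longrightarrow> \<theta> j = 0 \<Longrightarrow> integrable M (e j)"
    and null_mean: "\<And>j. 1 \<le> j \<Longrightarrow> \<theta> j = 0 \<Longrightarrow> (\<integral>\<omega>. e j \<omega> \<partial>M) \<le> 1"
    and null_indep: "prob_space.indep_vars M (\<lambda>_. borel) e {j. 1 \<le> j \<and> \<theta> j = 0}"
    and null_nonnull_indep: "prob_space.indep_var M
        (PiM {j. 1 \<le> j \<and> \<theta> j = 0} (\<lambda>_. borel)) (\<lambda>\<omega>. \<lambda>j\<in>{j. 1 \<le> j \<and> \<theta> j = 0}. e j \<omega>)
        (PiM {j. 1 \<le> j \<and> \<theta> j = 1} (\<lambda>_. borel)) (\<lambda>\<omega>. \<lambda>j\<in>{j. 1 \<le> j \<and> \<theta> j = 1}. e j \<omega>)"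
    and f_nonneg: "\<And>s xs. 1 \<le> s \<Longrightarrow> length xs = s - 1 \<Longrightarrow> 0 \<le> f s xs"
    and f_mono: "\<And>s xs ys. 1 \<le> s \<Longrightarrow> length xs = s - 1 \<Longrightarrow> length ys = s - 1 \<Longrightarrow>
        list_all2 (\<le>) xs ys \<Longrightarrow> f s xs \<le> f s ys"
    and "1 \<le> t"
    and hyp: "(\<integral>\<omega>. FDPstar \<theta> f (\<lambda>j. e j \<omega>) t \<partial>M) \<le> alpha"
  shows "FDR M \<theta> f e t \<le> alpha"
proof -
  interpret prob_space M by fact
  define N where "N = {j. 1 \<le> j \<and> \<theta> j = 0}"
  define P where "P = {j. 1 \<le> j \<and> \<theta> j = 1}"
  define E where "E = (\<lambda>i. if i = 0 then {(\<lambda>\<omega>. \<lambda>i\<in>P. e i \<omega>) -` B \<inter> space M | B. B \<in> sets (PiM P (\<lambda>_. borel))}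
                            else {e i -` B \<inter> space M | B. B \<in> sets borel})"
  have ind: "indep_vars (\<lambda>_. borel) e N" using null_indep by (simp add: N_def)
  have nn: "indep_var (PiM N (\<lambda>_. borel)) (\<lambda>\<omega>. \<lambda>i\<in>N. e i \<omega>) (PiM P (\<lambda>_. borel)) (\<lambda>\<omega>. \<lambda>i\<in>P. e i \<omega>)"
    using null_nonnull_indep by (simp add: N_def P_def)
  have N0: "0 \<notin> N" by (simp add: N_def)
  have mX: "\<And>i. (\<lambda>\<omega>. e i \<omega>) \<in> borel_measurable M" using e_meas by simp
  let ?R = "\<lambda>\<omega>. max (rej f (\<lambda>i. e i \<omega>) t) 1"
  have iD: "integrable M (\<lambda>\<omega>. dlt f (\<lambda>i. e i \<omega>) j / ?R \<omega>)" for j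
  proof (rule integrable_const_bound[where B=1])
    show "AE \<omega> in M. norm (dlt f (\<lambda>i. e i \<omega>) j / ?R \<omega>) \<le> 1"
    proof (rule AE_I2)
      fix \<omega>
      have a: "0 \<le> dlt f (\<lambda>i. e i \<omega>) j" "dlt f (\<lambda>i. e i \<omega>) j \<le> 1" by (rule dlt_01)+
      have b: "1 \<le> ?R \<omega>" by simp
      have c: "dlt f (\<lambda>i. e i \<omega>) j \<le> ?R \<omega>" using a b by linarith
      have x1: "dlt f (\<lambda>i. e i \<omega>) j / ?R \<omega> \<le> 1"
        by (rule divide_le_eq_1_pos[THEN iffD2]) (use b c in linarith)+
      have x0: "0 \<le> dlt f (\<lambda>i. e i \<omega>) j / ?R \<omega>" using a b by simp
      show "norm (dlt f (\<lambda>i. e i \<omega>) j / ?R \<omega>) \<le> 1"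
        using x1 by (simp only: real_norm_def abs_of_nonneg[OF x0])
    qed
    show "(\<lambda>\<omega>. dlt f (\<lambda>i. e i \<omega>) j / ?R \<omega>) \<in> borel_measurable M"
      by (rule quot_meas(2)[of "\<lambda>\<omega> i. e i \<omega>"]) (rule mX)
  qed
  have key: "(\<integral>\<omega>. dlt f (\<lambda>i. e i \<omega>) j / ?R \<omega> \<partial>M) \<le> (\<integral>\<omega>. lvl f (\<lambda>i. e i \<omega>) j / ?R \<omega> \<partial>M)
     \<and> integrable M (\<lambda>\<omega>. lvl f (\<lambda>i. e i \<omega>) j / ?R \<omega>)"
    if jn: "j \<in> nulls \<theta> t" for j
  proof -
    have j1: "1 \<le> j" and jt: "j \<le> t" and thj: "\<theta> j = 0" using jn by (auto simp: nulls_def)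
    have jN: "j \<in> N" using j1 thj by (simp add: N_def)
    define m where "m = (\<integral>\<omega>. e j \<omega> \<partial>M)"
    define Y where "Y = (\<lambda>(x::real) \<omega> (i::nat). if i = j then x else if i = 0 then 0 else e i \<omega>)"
    define H where "H = (\<lambda>x \<omega>. lvl f (Y x \<omega>) j / max (rej f (Y x \<omega>) t) 1)"
    define C where "C = Max (f j ` {xs. length xs = j - 1})"
    have finL: "finite {xs::bool list. length xs = j - 1}"
      using finite_lists_length_eq[of "UNIV :: bool set" "j - 1"] by simp
    have lvl_bd: "0 \<le> lvl f xv j \<and> lvl f xv j \<le> C" for xv
      unfolding lvl_def C_def using j1 finL
      by (auto intro!: f_nonneg Max_ge)
    have C0: "0 \<le> C" using lvl_bd[of undefined] by linarith
    have HY: "H (e j \<omega>) \<omega> = lvl f (\<lambda>i. e i \<omega>) j / ?R \<omega>" for \<omega>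
    proof -
      have "decs f (Y (e j \<omega>) \<omega>) = decs f (\<lambda>i. e i \<omega>)"
        by (rule ext, rule decs_local) (auto simp: Y_def)
      then show ?thesis unfolding H_def lvl_def rej_def dlt_def by simp
    qed
    have H_bd: "0 \<le> H x \<omega> \<and> H x \<omega> \<le> C" for x \<omega>
    proof -
      have a: "0 \<le> lvl f (Y x \<omega>) j" "lvl f (Y x \<omega>) j \<le> C" using lvl_bd by auto
      have "lvl f (Y x \<omega>) j / max (rej f (Y x \<omega>) t) 1 \<le> lvl f (Y x \<omega>) j"
        using a by (simp add: divide_le_eq mult_le_cancel_left1 mult_le_cancel_left)
      then show ?thesis using a unfolding H_def by auto
    qed
    have H_anti: "H x' \<omega> \<le> H x \<omega>" if "x \<le> x'" for x x' \<omega>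
    proof -
      have l: "lvl f (Y x \<omega>) j = lvl f (Y x' \<omega>) j"
        unfolding lvl_def by (subst decs_local[where xv' = "Y x' \<omega>"]) (auto simp: Y_def)
      have r: "rej f (Y x \<omega>) t \<le> rej f (Y x' \<omega>) t"
        by (rule rej_mono[OF f_mono]) (use that in \<open>auto simp: Y_def\<close>)
      show ?thesis unfolding H_def l
        by (rule divide_left_mono) (use lvl_bd r in auto)
    qed
    have dlt_le: "dlt f (\<lambda>i. e i \<omega>) j \<le> lvl f (\<lambda>i. e i \<omega>) j * e j \<omega>" if "\<omega> \<in> space M" for \<omega>
    proof -
      have jj: "j = Suc (j - 1)" using j1 by simp
      let ?a = "f j (decs f (\<lambda>i. e i \<omega>) (j - 1))"
      have d: "decs f (\<lambda>i. e i \<omega>) j ! (j - 1) = (0 < ?a \<and> e j \<omega> \<ge> 1 / ?a)"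
        using decs_last[of f "\<lambda>i. e i \<omega>" "j - 1"] jj by simp
      have a0: "0 \<le> ?a" using lvl_bd[of "\<lambda>i. e i \<omega>"] by (simp add: lvl_def)
      show ?thesis
      proof (cases "0 < ?a \<and> e j \<omega> \<ge> 1 / ?a")
        case True
        then have "1 \<le> ?a * e j \<omega>" by (simp add: divide_le_eq mult.commute)
        then show ?thesis using True d by (simp add: dlt_def lvl_def)
      next
        case False
        then have "dlt f (\<lambda>i. e i \<omega>) j = 0" using d by (simp add: dlt_def)
        moreover have "0 \<le> lvl f (\<lambda>i. e i \<omega>) j * e j \<omega>"
          using a0 e_nonneg[OF that, of j] by (simp add: lvl_def)
        ultimately show ?thesis by simp
      qed
    qed
    have P1: "dlt f (\<lambda>i. e i \<omega>) j / ?R \<omega> \<le> e j \<omega> * H (e j \<omega>) \<omega>" if "\<omega> \<in> space M" for \<omega>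
    proof -
      have "dlt f (\<lambda>i. e i \<omega>) j / ?R \<omega> \<le> lvl f (\<lambda>i. e i \<omega>) j * e j \<omega> / ?R \<omega>"
        using dlt_le[OF that] by (intro divide_right_mono) auto
      then show ?thesis unfolding HY by (simp add: mult.commute)
    qed
    have P2: "e j \<omega> * H (e j \<omega>) \<omega> \<le> m * H (e j \<omega>) \<omega> + e j \<omega> * H m \<omega> - m * H m \<omega>" for \<omega>
    proof -
      have "(e j \<omega> - m) * (H (e j \<omega>) \<omega> - H m \<omega>) \<le> 0"
      proof (cases "e j \<omega> \<le> m")
        case True then show ?thesis using H_anti[OF True, of \<omega>] by (simp add: mult_nonpos_nonneg)
      next
        case False then show ?thesis using H_anti[of m "e j \<omega>" \<omega>] by (simp add: mult_nonneg_nonpos)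
      qed
      then show ?thesis by (simp add: algebra_simps)
    qed
    have mY: "(\<lambda>\<omega>. Y x \<omega> i) \<in> borel_measurable M" for x i
      unfolding Y_def using mX[of i] by simp
    have mH: "H x \<in> borel_measurable M" for x
      unfolding H_def by (rule quot_meas(1)[of "Y x"]) (rule mY)
    have mL: "(\<lambda>\<omega>. lvl f (\<lambda>i. e i \<omega>) j / ?R \<omega>) \<in> borel_measurable M"
      by (rule quot_meas(1)[of "\<lambda>\<omega> i. e i \<omega>"]) (rule mX)
    have mHe: "(\<lambda>\<omega>. H (e j \<omega>) \<omega>) \<in> borel_measurable M" unfolding HY by (rule mL)
    have iE: "integrable M (e j)" using null_integrable[OF j1 thj] .
    have iHe: "integrable M (\<lambda>\<omega>. H (e j \<omega>) \<omega>)"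
      by (rule integrable_const_bound[where B=C]) (use H_bd mHe in auto)
    have iHm: "integrable M (H m)"
      by (rule integrable_const_bound[where B=C]) (use H_bd mH in auto)
    have iEH: "integrable M (\<lambda>\<omega>. e j \<omega> * g \<omega>)" if mx: "g \<in> borel_measurable M"
       and bx: "\<And>\<omega>. 0 \<le> g \<omega> \<and> g \<omega> \<le> C" for g :: "'a \<Rightarrow> real"
    proof (rule Bochner_Integration.integrable_bound[where f="\<lambda>\<omega>. C * e j \<omega>"])
      show "integrable M (\<lambda>\<omega>. C * e j \<omega>)" using iE by simp
      show "(\<lambda>\<omega>. e j \<omega> * g \<omega>) \<in> borel_measurable M"
        using mx e_meas[of j] by (rule borel_measurable_times[rotated])
      show "AE \<omega> in M. norm (e j \<omega> * g \<omega>) \<le> norm (C * e j \<omega>)"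
      proof (rule AE_I2)
        fix \<omega> assume w: "\<omega> \<in> space M"
        have "e j \<omega> * g \<omega> \<le> C * e j \<omega>"
          using mult_left_mono[of "g \<omega>" C "e j \<omega>"] bx[of \<omega>] e_nonneg[OF w, of j] by (simp add: mult.commute)
        then show "norm (e j \<omega> * g \<omega>) \<le> norm (C * e j \<omega>)"
          using bx[of \<omega>] e_nonneg[OF w, of j] C0 by simp
      qed
    qed
    have iEHe: "integrable M (\<lambda>\<omega>. e j \<omega> * H (e j \<omega>) \<omega>)"
      by (rule iEH[OF mHe]) (rule H_bd)
    have iEHm: "integrable M (\<lambda>\<omega>. e j \<omega> * H m \<omega>)"
      by (rule iEH[OF mH]) (rule H_bd)
    define S where "S = sigma (space M) (\<Union>i\<in>insert 0 (N - {j}). E i)"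
    note LS = L_sets[OF E_def S_def]
    have mYS: "(\<lambda>\<omega>. Y m \<omega> i) \<in> borel_measurable S" for i
    proof (cases "i = j \<or> i = 0")
      case True then show ?thesis using j1 by (auto simp: Y_def)
    next
      case False
      then have "i \<in> N - {j} \<or> i \<in> P" using theta01[of i] by (auto simp: N_def P_def)
      then have "e i \<in> borel_measurable S" using False by (intro L_meas[OF E_def S_def]) auto
      then show ?thesis using False by (simp add: Y_def)
    qed
    have mHS: "H m \<in> borel_measurable S"
      unfolding H_def by (rule quot_meas(1)[of "Y m"]) (rule mYS)
    have indep: "indep_var borel (e j) borel (H m)"
    proof (rule L_indep[OF ind nn jN N0 E_def mH])
      fix B :: "real set" assume "B \<in> sets borel"
      then have "H m -` B \<inter> space S \<in> sets S" by (rule measurable_sets[OF mHS])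
      then show "H m -` B \<inter> space M \<in> sigma_sets (space M) (\<Union>i\<in>insert 0 (N - {j}). E i)"
        by (simp add: LS)
    qed
    have m1: "m \<le> 1" unfolding m_def using null_mean[OF j1 thj] .
    have EZ: "(\<integral>\<omega>. e j \<omega> * H m \<omega> \<partial>M) = m * (\<integral>\<omega>. H m \<omega> \<partial>M)"
      using indep_var_lebesgue_integral[OF indep iE iHm] by (simp only: m_def[symmetric])
    have "(\<integral>\<omega>. dlt f (\<lambda>i. e i \<omega>) j / ?R \<omega> \<partial>M) \<le> (\<integral>\<omega>. e j \<omega> * H (e j \<omega>) \<omega> \<partial>M)"
      by (rule integral_mono[OF iD iEHe P1])
    also have "\<dots> \<le> (\<integral>\<omega>. m * H (e j \<omega>) \<omega> + e j \<omega> * H m \<omega> - m * H m \<omega> \<partial>M)"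
      by (rule integral_mono[OF iEHe _ P2]) (use iHe iEHm iHm in auto)
    also have "\<dots> = m * (\<integral>\<omega>. H (e j \<omega>) \<omega> \<partial>M) + (\<integral>\<omega>. e j \<omega> * H m \<omega> \<partial>M) - m * (\<integral>\<omega>. H m \<omega> \<partial>M)"
      using iHe iEHm iHm by simp
    also have "\<dots> = m * (\<integral>\<omega>. H (e j \<omega>) \<omega> \<partial>M)" using EZ by simp
    also have "\<dots> \<le> (\<integral>\<omega>. H (e j \<omega>) \<omega> \<partial>M)"
    proof -
      have "0 \<le> (\<integral>\<omega>. H (e j \<omega>) \<omega> \<partial>M)" using H_bd by (simp add: integral_nonneg)
      then have "m * (\<integral>\<omega>. H (e j \<omega>) \<omega> \<partial>M) \<le> 1 * (\<integral>\<omega>. H (e j \<omega>) \<omega> \<partial>M)"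
        by (rule mult_right_mono[OF m1])
      then show ?thesis by simp
    qed
    also have "\<dots> = (\<integral>\<omega>. lvl f (\<lambda>i. e i \<omega>) j / ?R \<omega> \<partial>M)" unfolding HY ..
    finally show ?thesis using iHe unfolding HY by simp
  qed
  have "FDR M \<theta> f e t = (\<Sum>j\<in>nulls \<theta> t. (\<integral>\<omega>. dlt f (\<lambda>i. e i \<omega>) j / ?R \<omega> \<partial>M))"
    unfolding FDR_def sum_divide_distrib by (rule Bochner_Integration.integral_sum[OF iD])
  also have "\<dots> \<le> (\<Sum>j\<in>nulls \<theta> t. (\<integral>\<omega>. lvl f (\<lambda>i. e i \<omega>) j / ?R \<omega> \<partial>M))"
    by (rule sum_mono) (use key in blast)
  also have "\<dots> = (\<integral>\<omega>. FDPstar \<theta> f (\<lambda>j. e j \<omega>) t \<partial>M)"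
    unfolding FDPstar_def sum_divide_distrib by (rule Bochner_Integration.integral_sum[symmetric]) (use key in blast)
  also have "\<dots> \<le> alpha" by (rule hyp)
  finally show ?thesis .
qed

end
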